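(* Let $\mathbb{K}$ be a skew field and $n\ge 2$. Every duality of $\mathsf{PG}(n,\mathbb{K})$ which is a polar $\{2,2'\}$-kangaroo is anisotropic.
   Context: A duality $\theta$ of $\mathsf{PG}(n,\mathbb{K})$ maps points to hyperplanes and hyperplanes to points (reversing incidence); it acts on incident point–hyperplane pairs by $(p,H)\mapsto(H^\theta,p^\theta)$. For incident pairs $(p,H),(p',H')$ the polar position is $2$ or $2'$ if and only if $p\neq p'$, $H\neq H'$, and ($p\in H'$ or $p'\in H$). $\theta$ is a polar $\{2,2'\}$-kangaroo if no pair is at position $2$ or $2'$ from its image. $\theta$ is anisotropic if it maps every chamber (complete flag) to an opposite chamber. *)

theory Defs
  imports "HOL-Analysis.Finite_Cartesian_Product"
begin

text \<open>The projective space PG(n,K), K a skew field (class division_ring), is modelled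
  on the left vector space K^(n+1) = 'a ^ 'n with CARD('n) = n+1. Scalars act on the left.\<close>

definition lsmult :: "'a::division_ring \<Rightarrow> 'a ^ 'n \<Rightarrow> 'a ^ 'n" where
  "lsmult c x = (\<chi> i. c * x $ i)"

definition lin_comb :: "(nat \<Rightarrow> 'a::division_ring) \<Rightarrow> ('a ^ 'n) list \<Rightarrow> 'a ^ 'n" where
  "lin_comb c vs = (\<Sum>i<length vs. lsmult (c i) (vs ! i))"

definition lin_indep :: "('a::division_ring ^ 'n) list \<Rightarrow> bool" where
  "lin_indep vs \<longleftrightarrow> (\<forall>c. lin_comb c vs = 0 \<longrightarrow> (\<forall>i<length vs. c i = 0))"

definition lspan :: "('a::division_ring ^ 'n) list \<Rightarrow> ('a ^ 'n) set" where
  "lspan vs = {lin_comb c vs | c. True}"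

text \<open>A (vector) subspace of dimension k: the span of k linearly independent vectors.
  Projective points are subspaces of dimension 1, hyperplanes have dimension n = CARD('n) - 1.\<close>
definition subspace_dim :: "nat \<Rightarrow> ('a::division_ring ^ 'n) set \<Rightarrow> bool" where
  "subspace_dim k U \<longleftrightarrow> (\<exists>vs. length vs = k \<and> lin_indep vs \<and> U = lspan vs)"

text \<open>Elements of PG(n,K): subspaces of projective dimension 0..n-1, i.e. vector dimension 1..n.\<close>
definition pg_elements :: "('a::division_ring ^ 'n) set set" where
  "pg_elements = {U. \<exists>k. 1 \<le> k \<and> k < CARD('n) \<and> subspace_dim k U}"

definition is_point :: "('a::division_ring ^ 'n) set \<Rightarrow> bool" where
  "is_point U \<longleftrightarrow> subspace_dim 1 U"

definition is_hyperplane :: "('a::division_ring ^ 'n) set \<Rightarrow> bool" where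
  "is_hyperplane U \<longleftrightarrow> subspace_dim (CARD('n) - 1) U"

definition duality :: "(('a::division_ring ^ 'n) set \<Rightarrow> ('a ^ 'n) set) \<Rightarrow> bool" where
  "duality \<theta> \<longleftrightarrow> bij_betw \<theta> pg_elements pg_elements
     \<and> (\<forall>U\<in>pg_elements. \<forall>W\<in>pg_elements. U \<subseteq> W \<longleftrightarrow> \<theta> W \<subseteq> \<theta> U)
     \<and> (\<forall>k U. 1 \<le> k \<and> k < CARD('n) \<and> subspace_dim k U \<longrightarrow> subspace_dim (CARD('n) - k) (\<theta> U))"

definition polar_pos_2 :: "('a::division_ring ^ 'n) set \<Rightarrow> ('a ^ 'n) set \<Rightarrow> ('a ^ 'n) set \<Rightarrow> ('a ^ 'n) set \<Rightarrow> bool" where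
  "polar_pos_2 p H p' H' \<longleftrightarrow> p \<noteq> p' \<and> H \<noteq> H' \<and> (p \<subseteq> H' \<or> p' \<subseteq> H)"

definition polar_22_kangaroo :: "(('a::division_ring ^ 'n) set \<Rightarrow> ('a ^ 'n) set) \<Rightarrow> bool" where
  "polar_22_kangaroo \<theta> \<longleftrightarrow>
     (\<forall>p H. is_point p \<and> is_hyperplane H \<and> p \<subseteq> H \<longrightarrow> \<not> polar_pos_2 p H (\<theta> H) (\<theta> p))"

definition chamber :: "(nat \<Rightarrow> ('a::division_ring ^ 'n) set) \<Rightarrow> bool" where
  "chamber F \<longleftrightarrow> (\<forall>i. 1 \<le> i \<and> i < CARD('n) \<longrightarrow> subspace_dim i (F i))
     \<and> (\<forall>i. 1 \<le> i \<and> i + 1 < CARD('n) \<longrightarrow> F i \<subseteq> F (i + 1))"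

definition opposite_chambers :: "(nat \<Rightarrow> ('a::division_ring ^ 'n) set) \<Rightarrow> (nat \<Rightarrow> ('a ^ 'n) set) \<Rightarrow> bool" where
  "opposite_chambers F G \<longleftrightarrow> (\<forall>i. 1 \<le> i \<and> i < CARD('n) \<longrightarrow> F i \<inter> G (CARD('n) - i) = {0})"

definition chamber_image :: "(('a::division_ring ^ 'n) set \<Rightarrow> ('a ^ 'n) set) \<Rightarrow> (nat \<Rightarrow> ('a ^ 'n) set) \<Rightarrow> (nat \<Rightarrow> ('a ^ 'n) set)" where
  "chamber_image \<theta> F = (\<lambda>i. \<theta> (F (CARD('n) - i)))"

definition anisotropic :: "(('a::division_ring ^ 'n) set \<Rightarrow> ('a ^ 'n) set) \<Rightarrow> bool" where
  "anisotropic \<theta> \<longleftrightarrow> (\<forall>F. chamber F \<longrightarrow> opposite_chambers F (chamber_image \<theta> F))"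

end

theory Submission
  imports Defs
begin

lemma lin_comb_nth: "lin_comb c vs $ i = (\<Sum>m<length vs. c m * (vs ! m) $ i)"
  by (simp add: lin_comb_def lsmult_def)

lemma zero_in_lspan: "0 \<in> lspan vs"
proof -
  have "0 = lin_comb (\<lambda>_. 0) vs" by (simp add: vec_eq_iff lin_comb_nth)
  then show ?thesis unfolding lspan_def by blast
qed

lemma lsmult_in_lspan:
  assumes "v \<in> lspan vs" shows "lsmult a v \<in> lspan vs"
proof -
  obtain d where d: "v = lin_comb d vs" using assms unfolding lspan_def by blast
  have "lsmult a v = lin_comb (\<lambda>m. a * d m) vs"
    by (simp add: d vec_eq_iff lin_comb_nth lsmult_def sum_distrib_left mult.assoc)
  then show ?thesis unfolding lspan_def by blast
qed

lemma lspan_single: "lspan [v] = {lsmult c v | c. True}"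
proof -
  have "lin_comb c [v] = lsmult (c 0) v" for c by (simp add: lin_comb_def)
  then show ?thesis unfolding lspan_def by auto
qed

lemma point_sub:
  assumes "v \<in> lspan vs" shows "lspan [v] \<subseteq> lspan vs"
  using assms lsmult_in_lspan unfolding lspan_single by blast

lemma point_dim:
  fixes v :: "'a::division_ring ^ 'n"
  assumes "v \<noteq> 0" shows "subspace_dim 1 (lspan [v])"
proof -
  obtain a where a: "v $ a \<noteq> 0" using assms by (auto simp: vec_eq_iff)
  have "lin_indep [v]"
    unfolding lin_indep_def
  proof (rule allI, rule impI)
    fix c assume "lin_comb c [v] = 0"
    then have "lin_comb c [v] $ a = 0" by simp
    then have "c 0 * v $ a = 0" by (simp only: lin_comb_nth) simp
    then have "c 0 = 0" using a by simp
    then show "\<forall>i<length [v]. c i = 0" by simp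
  qed
  then show ?thesis unfolding subspace_dim_def by (intro exI[of _ "[v]"]) simp
qed

definition fval :: "('n \<Rightarrow> 'a::division_ring) \<Rightarrow> 'a ^ 'n \<Rightarrow> 'a" where
  "fval \<phi> x = (\<Sum>j\<in>UNIV. x $ j * \<phi> j)"

definition kvec :: "('n \<Rightarrow> 'a::division_ring) \<Rightarrow> 'n \<Rightarrow> 'n \<Rightarrow> 'a ^ 'n" where
  "kvec \<phi> k j = (\<chi> i. if i = j then 1 else if i = k then - \<phi> j else 0)"

lemma sum_nth_distinct:
  assumes "distinct xs" shows "(\<Sum>m<length xs. g (xs ! m)) = (\<Sum>j\<in>set xs. g j)"
  using sum.reindex_bij_betw[OF bij_betw_nth[OF assms refl refl], of g] by simp

lemma fval_kvec:
  fixes \<phi> :: "'n::finite \<Rightarrow> 'a::division_ring"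
  assumes "\<phi> k = 1" "j \<noteq> k" shows "fval \<phi> (kvec \<phi> k j) = 0"
proof -
  have "fval \<phi> (kvec \<phi> k j) = (\<Sum>i\<in>UNIV. (if i = j then \<phi> j else 0) + (if i = k then - \<phi> j else 0))"
    unfolding fval_def kvec_def using assms by (intro sum.cong) auto
  also have "\<dots> = 0" by (simp add: sum.distrib)
  finally show ?thesis .
qed

lemma hyper_dim:
  fixes \<phi> :: "'n::finite \<Rightarrow> 'a::division_ring"
  assumes "\<phi> k = 1"
  shows "subspace_dim (CARD('n) - 1) {x. fval \<phi> x = 0}"
proof -
  obtain xs where xs: "distinct xs" "set xs = UNIV - {k}"
    using finite_distinct_list[of "UNIV - {k}"] by auto
  define vs where "vs = map (kvec \<phi> k) xs"
  have len: "length vs = CARD('n) - 1"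
    unfolding vs_def using distinct_card[OF xs(1)] xs(2) by (simp add: card_Diff_singleton)
  have nk: "xs ! m \<noteq> k" if "m < length xs" for m using xs(2) that nth_mem by fastforce
  have indep: "lin_indep vs"
    unfolding lin_indep_def
  proof (rule allI, rule impI)
    fix c assume c: "lin_comb c vs = 0"
    show "\<forall>i<length vs. c i = 0"
    proof (intro allI impI)
      fix m0 assume m0: "m0 < length vs"
      have "0 = lin_comb c vs $ (xs ! m0)" using c by simp
      also have "\<dots> = (\<Sum>m<length vs. if m = m0 then c m else 0)"
        unfolding lin_comb_nth
      proof (intro sum.cong refl)
        fix m assume "m \<in> {..<length vs}"
        then show "c m * vs ! m $ (xs ! m0) = (if m = m0 then c m else 0)"
          using m0 nk[of m0] xs(1) by (auto simp: vs_def kvec_def nth_eq_iff_index_eq)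
      qed
      also have "\<dots> = c m0" using m0 by simp
      finally show "c m0 = 0" by simp
    qed
  qed
  have "{x. fval \<phi> x = 0} = lspan vs"
  proof (intro equalityI subsetI)
    fix x assume "x \<in> {x. fval \<phi> x = 0}"
    then have fx: "fval \<phi> x = 0" by simp
    have "x = lin_comb (\<lambda>m. x $ (xs ! m)) vs"
    proof (subst vec_eq_iff, intro allI)
      fix i
      have "lin_comb (\<lambda>m. x $ (xs ! m)) vs $ i = (\<Sum>m<length xs. (\<lambda>j. x $ j * kvec \<phi> k j $ i) (xs ! m))"
        by (simp add: lin_comb_nth vs_def)
      also have "\<dots> = (\<Sum>j\<in>UNIV - {k}. x $ j * kvec \<phi> k j $ i)"
        using sum_nth_distinct[OF xs(1)] xs(2) by simp
      also have "\<dots> = x $ i"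
      proof (cases "i = k")
        case True
        have "(\<Sum>j\<in>UNIV - {k}. x $ j * kvec \<phi> k j $ i) = - (\<Sum>j\<in>UNIV - {k}. x $ j * \<phi> j)"
          unfolding True kvec_def by (simp add: sum_negf[symmetric])
        moreover have "fval \<phi> x = x $ k * \<phi> k + (\<Sum>j\<in>UNIV - {k}. x $ j * \<phi> j)"
          unfolding fval_def by (simp add: sum.remove)
        ultimately show ?thesis using fx assms True by (simp add: add_eq_0_iff2)
      next
        case False
        have "(\<Sum>j\<in>UNIV - {k}. x $ j * kvec \<phi> k j $ i) = (\<Sum>j\<in>UNIV - {k}. if j = i then x $ i else 0)"
          using False by (intro sum.cong) (auto simp: kvec_def)
        also have "\<dots> = x $ i" using False by simp
        finally show ?thesis .
      qed
      finally show "x $ i = lin_comb (\<lambda>m. x $ (xs ! m)) vs $ i" by simp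
    qed
    then show "x \<in> lspan vs" unfolding lspan_def by blast
  next
    fix x assume "x \<in> lspan vs"
    then obtain c where x: "x = lin_comb c vs" unfolding lspan_def by blast
    have "fval \<phi> x = (\<Sum>j\<in>UNIV. \<Sum>m<length vs. c m * (vs ! m $ j * \<phi> j))"
      unfolding fval_def x lin_comb_nth by (simp add: sum_distrib_right mult.assoc)
    also have "\<dots> = (\<Sum>m<length vs. c m * fval \<phi> (vs ! m))"
      by (subst sum.swap) (simp add: fval_def sum_distrib_left)
    also have "\<dots> = 0"
      by (intro sum.neutral) (auto simp: vs_def fval_kvec[of \<phi> k, OF assms] nk)
    finally show "x \<in> {x. fval \<phi> x = 0}" by simp
  qed
  then show ?thesis unfolding subspace_dim_def using len indep by blast
qed

lemma fval_axis: "fval \<phi> (\<chi> i. if i = j then 1 else 0) = \<phi> j"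
proof -
  have "(\<chi> i. if i = j then 1 else 0) $ ja * \<phi> ja = (if ja = j then \<phi> j else 0)" for ja
    by simp
  then show ?thesis unfolding fval_def by simp
qed

lemma subspace_facts:
  assumes "subspace_dim k U"
  shows "0 \<in> U" and "v \<in> U \<Longrightarrow> lspan [v] \<subseteq> U"
  using assms zero_in_lspan point_sub unfolding subspace_dim_def by blast+

definition psi :: "'n \<Rightarrow> 'n \<Rightarrow> 'a::division_ring \<Rightarrow> 'n \<Rightarrow> 'a" where
  "psi b a t = (\<lambda>j. if j = b then 1 else if j = a then t else 0)"

lemma fval_psi:
  fixes x :: "'a::division_ring ^ 'n::finite"
  assumes "a \<noteq> b" shows "fval (psi b a t) x = x $ b + x $ a * t"
proof -
  have "fval (psi b a t) x = (\<Sum>j\<in>UNIV. (if j = b then x $ b else 0) + (if j = a then x $ a * t else 0))"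
    unfolding fval_def psi_def using assms by (intro sum.cong) auto
  then show ?thesis by (simp add: sum.distrib)
qed

lemma fval_psi_zero:
  fixes v :: "'a::division_ring ^ 'n::finite"
  assumes "a \<noteq> b" "v $ a \<noteq> 0"
  shows "fval (psi b a (- (inverse (v $ a) * v $ b))) v = 0"
proof -
  have "v $ a * (inverse (v $ a) * v $ b) = v $ b"
    using assms(2) by (simp add: mult.assoc[symmetric])
  note eq = this
  have "fval (psi b a (- (inverse (v $ a) * v $ b))) v = v $ b + v $ a * - (inverse (v $ a) * v $ b)"
    by (rule fval_psi[OF assms(1)])
  also have "\<dots> = v $ b - v $ a * (inverse (v $ a) * v $ b)" by simp
  also have "\<dots> = 0" by (simp only: eq) simp
  finally show ?thesis .
qed

lemma fval_add: "fval (\<lambda>j. f j + g j) x = fval f x + fval g x"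
  by (simp add: fval_def distrib_left sum.distrib)

lemma three_elems:
  assumes "CARD('n::finite) \<ge> 3"
  shows "\<exists>b c::'n. b \<noteq> a \<and> c \<noteq> a \<and> b \<noteq> c"
proof -
  have "card (UNIV - {a::'n}) \<ge> 2" using assms by (simp add: card_Diff_singleton)
  then obtain b where b: "b \<in> UNIV - {a}"
    by (metis card.empty ex_in_conv not_numeral_le_zero)
  have "card (UNIV - {a::'n, b}) \<ge> 1" using assms b by (simp add: card_Diff_subset)
  then obtain c where c: "c \<in> UNIV - {a, b}"
    by (metis card.empty ex_in_conv not_one_le_zero)
  show ?thesis using b c by blast
qed

theorem proposition4p3:
  fixes \<theta> :: "('a::division_ring ^ 'n) set \<Rightarrow> ('a ^ 'n) set"
  assumes "CARD('n) \<ge> 3"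
    and "duality \<theta>"
    and "polar_22_kangaroo \<theta>"
  shows "anisotropic \<theta>"
  unfolding anisotropic_def opposite_chambers_def
proof (intro allI impI)
  fix F :: "nat \<Rightarrow> ('a ^ 'n) set" and i :: nat
  assume F: "chamber F" and i: "1 \<le> i \<and> i < CARD('n)"
  define N where "N = CARD('n)"
  have N3: "N \<ge> 3" using assms(1) N_def by simp
  have dU: "subspace_dim i (F i)" using F i unfolding chamber_def by blast
  have img: "chamber_image \<theta> F (CARD('n) - i) = \<theta> (F i)"
    unfolding chamber_image_def using i by simp
  have dT: "subspace_dim (CARD('n) - i) (\<theta> (F i))"
    using assms(2) dU i unfolding duality_def by blast
  have Uel: "F i \<in> pg_elements" unfolding pg_elements_def using dU i by blast
  have bij: "bij_betw \<theta> pg_elements pg_elements"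
    and rev: "\<And>U W. U \<in> pg_elements \<Longrightarrow> W \<in> pg_elements \<Longrightarrow> U \<subseteq> W \<longleftrightarrow> \<theta> W \<subseteq> \<theta> U"
    using assms(2) unfolding duality_def by blast+
  have inj: "inj_on \<theta> pg_elements" using bij bij_betw_def by blast
  have "F i \<inter> \<theta> (F i) \<subseteq> {0}"
  proof (rule ccontr)
    assume "\<not> F i \<inter> \<theta> (F i) \<subseteq> {0}"
    then obtain v where vU: "v \<in> F i" and vT: "v \<in> \<theta> (F i)" and v0: "v \<noteq> 0" by blast
    define p where "p = lspan [v]"
    have pdim: "subspace_dim 1 p" unfolding p_def using point_dim[OF v0] .
    have ppt: "is_point p" unfolding is_point_def using pdim .
    have pel: "p \<in> pg_elements" unfolding pg_elements_def using pdim N3 N_def by auto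
    have pU: "p \<subseteq> F i" unfolding p_def using subspace_facts(2)[OF dU vU] .
    have pT: "p \<subseteq> \<theta> (F i)" unfolding p_def using subspace_facts(2)[OF dT vT] .
    have "\<theta> (F i) \<subseteq> \<theta> p" using rev[OF pel Uel] pU by blast
    with pT have abs: "p \<subseteq> \<theta> p" by blast
    have key: "p = \<theta> H \<or> H = \<theta> p" if "is_hyperplane H" "v \<in> H" for H
    proof -
      have "p \<subseteq> H" unfolding p_def using subspace_facts(2)[OF that(1)[unfolded is_hyperplane_def] that(2)] .
      then have "\<not> polar_pos_2 p H (\<theta> H) (\<theta> p)"
        using assms(3) ppt that(1) unfolding polar_22_kangaroo_def by blast
      then show ?thesis using abs unfolding polar_pos_2_def by blast
    qed
    have hel: "H \<in> pg_elements" if "is_hyperplane H" for H :: "('a ^ 'n) set"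
      unfolding pg_elements_def using that N3 N_def unfolding is_hyperplane_def
      by (intro CollectI exI[of _ "CARD('n) - 1"]) auto
    obtain a where a: "v $ a \<noteq> 0" using v0 by (auto simp: vec_eq_iff)
    obtain b c where bc: "b \<noteq> a" "c \<noteq> a" "b \<noteq> c" using three_elems[OF assms(1), of a] by blast
    define \<phi>1 where "\<phi>1 = psi b a (- (inverse (v $ a) * v $ b))"
    define \<phi>2 where "\<phi>2 = psi c a (- (inverse (v $ a) * v $ c))"
    define \<phi>3 where "\<phi>3 = (\<lambda>j. \<phi>1 j + \<phi>2 j)"
    define H1 where "H1 = {x. fval \<phi>1 x = 0}"
    define H2 where "H2 = {x. fval \<phi>2 x = 0}"
    define H3 where "H3 = {x. fval \<phi>3 x = 0}"
    have p1: "\<phi>1 b = 1" "\<phi>1 c = 0" unfolding \<phi>1_def psi_def using bc by auto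
    have p2: "\<phi>2 c = 1" "\<phi>2 b = 0" unfolding \<phi>2_def psi_def using bc by auto
    have p3: "\<phi>3 b = 1" "\<phi>3 c = 1" unfolding \<phi>3_def using p1 p2 by auto
    have h1: "is_hyperplane H1" unfolding is_hyperplane_def H1_def using hyper_dim[of \<phi>1 b] p1 by simp
    have h2: "is_hyperplane H2" unfolding is_hyperplane_def H2_def using hyper_dim[of \<phi>2 c] p2 by simp
    have h3: "is_hyperplane H3" unfolding is_hyperplane_def H3_def using hyper_dim[of \<phi>3 b] p3 by simp
    have v1: "v \<in> H1" unfolding H1_def \<phi>1_def using fval_psi_zero[OF bc(1)[symmetric] a] by simp
    have v2: "v \<in> H2" unfolding H2_def \<phi>2_def using fval_psi_zero[OF bc(2)[symmetric] a] by simp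
    have v3: "v \<in> H3" using v1 v2 unfolding H3_def H1_def H2_def \<phi>3_def fval_add by simp
    define ec :: "'a ^ 'n" where "ec = (\<chi> i. if i = c then 1 else 0)"
    define eb :: "'a ^ 'n" where "eb = (\<chi> i. if i = b then 1 else 0)"
    have "ec \<in> H1" "ec \<notin> H2" "ec \<notin> H3" "eb \<in> H2" "eb \<notin> H3"
      unfolding H1_def H2_def H3_def ec_def eb_def using p1 p2 p3 by (auto simp: fval_axis)
    then have d: "H1 \<noteq> H2" "H1 \<noteq> H3" "H2 \<noteq> H3" by blast+
    have e1: "H1 \<in> pg_elements" "H2 \<in> pg_elements" "H3 \<in> pg_elements" using hel h1 h2 h3 by blast+
    have k1: "p = \<theta> H1 \<or> H1 = \<theta> p" using key h1 v1 by blast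
    have k2: "p = \<theta> H2 \<or> H2 = \<theta> p" using key h2 v2 by blast
    have k3: "p = \<theta> H3 \<or> H3 = \<theta> p" using key h3 v3 by blast
    have i12: "\<theta> H1 \<noteq> \<theta> H2" "\<theta> H1 \<noteq> \<theta> H3" "\<theta> H2 \<noteq> \<theta> H3"
      using inj e1 d unfolding inj_on_def by blast+
    show False using k1 k2 k3 d i12 by metis
  qed
  moreover have "0 \<in> F i \<inter> \<theta> (F i)" using subspace_facts(1)[OF dU] subspace_facts(1)[OF dT] by blast
  ultimately show "F i \<inter> chamber_image \<theta> F (CARD('n) - i) = {0}" unfolding img by blast
qed

end
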